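(* A strategy of the chair is regret-free if and only if it never misses an opportunity and never takes a risk.
   Context: Let $\mathcal{X}$ be a finite set of alternatives. A proto-ranking is an irreflexive and transitive binary relation on $\mathcal{X}$; a ranking is a total proto-ranking; a tournament is a total and asymmetric binary relation on $\mathcal{X}$. The chair has a fixed preference $\succ$, a ranking on $\mathcal{X}$. Interaction: given a tournament $\mathrel{W}$, set $R_0=\varnothing$. In each period $t\geq1$ in which $R_{t-1}$ is not total, the chair offers a pair $\{x,y\}$ of distinct alternatives unranked by $R_{t-1}$; the winner is $x$ if $x\mathrel{W}y$ and $y$ otherwise, and $R_t$ is the transitive closure of $R_{t-1}\cup\{(\text{winner},\text{loser})\}$, stopping when $R_t$ is total. A history is a finite sequence of (winner, loser) pairs that can arise this way; terminal if its induced proto-ranking is total. A strategy assigns to each non-terminal history a pair unranked at that history. The outcome of $\sigma$ under $\mathrel{W}$ is the final ranking. A non-terminal history is on the path of $\sigma$ if it is generated by $\sigma$ and some tournament. A ranking is $\mathrel{W}$-feasible if it is the outcome under $\mathrel{W}$ of some strategy. $R$ is more aligned with $\succ$ than $R'$ if for all $x\succ y$, $xR'y$ implies $xRy$. A ranking is $\mathrel{W}$-unimprovable if no other $\mathrel{W}$-feasible ranking is more aligned with $\succ$. A strategy is regret-free if for every tournament $\mathrel{W}$ its outcome under $\mathrel{W}$ is $\mathrel{W}$-unimprovable. Errors: let $R$ be a non-total proto-ranking and $x\succ y$ alternatives unranked by $R$. Offering $\{x,y\}$ misses an opportunity at $R$ if there is $z$ with $x\succ z\succ y$ and neither $yRz$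 nor $zRx$. Offering $\{x,y\}$ takes a risk at $R$ if there is $z$ with either (a) $z\succ y$, $xRz$ and not $yRz$, or (b) $x\succ z$, $zRy$ and not $zRx$. A strategy never misses an opportunity (never takes a risk) if at no history on its path does the pair it offers miss an opportunity (take a risk) at the current proto-ranking. *)

theory Defs
  imports Main
begin

(* Alternatives: the elements of a finite type 'a (X = UNIV).
   Binary relations: ('a \<times> 'a) set, (x,y) \<in> R meaning x R y. *)

definition proto_ranking :: "('a \<times> 'a) set \<Rightarrow> bool" where
  "proto_ranking R \<longleftrightarrow> irrefl R \<and> trans R"

definition ranking :: "('a \<times> 'a) set \<Rightarrow> bool" where
  "ranking R \<longleftrightarrow> proto_ranking R \<and> total R"

definition tournament :: "('a \<times> 'a) set \<Rightarrow> bool" where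
  "tournament W \<longleftrightarrow> total W \<and> asym W"

definition unranked :: "('a \<times> 'a) set \<Rightarrow> 'a \<Rightarrow> 'a \<Rightarrow> bool" where
  "unranked R x y \<longleftrightarrow> x \<noteq> y \<and> (x, y) \<notin> R \<and> (y, x) \<notin> R"

(* A history is a list of (winner, loser) pairs; its induced proto-ranking
   is the transitive closure of the set of these pairs. *)
definition hist_rel :: "('a \<times> 'a) list \<Rightarrow> ('a \<times> 'a) set" where
  "hist_rel h = trancl (set h)"

definition terminal :: "('a \<times> 'a) list \<Rightarrow> bool" where
  "terminal h \<longleftrightarrow> total (hist_rel h)"

inductive history :: "('a \<times> 'a) list \<Rightarrow> bool" where
  Nil: "history []"
| snoc: "history h \<Longrightarrow> \<not> terminal h \<Longrightarrow> unranked (hist_rel h) x y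
         \<Longrightarrow> history (h @ [(x, y)])"

definition strategy :: "(('a \<times> 'a) list \<Rightarrow> 'a set) \<Rightarrow> bool" where
  "strategy \<sigma> \<longleftrightarrow> (\<forall>h. history h \<and> \<not> terminal h \<longrightarrow>
      (\<exists>x y. \<sigma> h = {x, y} \<and> unranked (hist_rel h) x y))"

inductive gen :: "(('a \<times> 'a) list \<Rightarrow> 'a set) \<Rightarrow> ('a \<times> 'a) set \<Rightarrow> ('a \<times> 'a) list \<Rightarrow> bool"
  for \<sigma> W where
  Nil: "gen \<sigma> W []"
| step: "gen \<sigma> W h \<Longrightarrow> \<not> terminal h \<Longrightarrow> \<sigma> h = {x, y} \<Longrightarrow> unranked (hist_rel h) x y
         \<Longrightarrow> (x, y) \<in> W \<Longrightarrow> gen \<sigma> W (h @ [(x, y)])"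

definition outcome :: "(('a \<times> 'a) list \<Rightarrow> 'a set) \<Rightarrow> ('a \<times> 'a) set \<Rightarrow> ('a \<times> 'a) set \<Rightarrow> bool" where
  "outcome \<sigma> W R \<longleftrightarrow> (\<exists>h. gen \<sigma> W h \<and> terminal h \<and> hist_rel h = R)"

definition feasible :: "('a \<times> 'a) set \<Rightarrow> ('a \<times> 'a) set \<Rightarrow> bool" where
  "feasible W R \<longleftrightarrow> (\<exists>\<sigma>. strategy \<sigma> \<and> outcome \<sigma> W R)"

definition more_aligned :: "('a \<times> 'a) set \<Rightarrow> ('a \<times> 'a) set \<Rightarrow> ('a \<times> 'a) set \<Rightarrow> bool" where
  "more_aligned P R R' \<longleftrightarrow> (\<forall>x y. (x, y) \<in> P \<longrightarrow> (x, y) \<in> R' \<longrightarrow> (x, y) \<in> R)"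

definition unimprovable :: "('a \<times> 'a) set \<Rightarrow> ('a \<times> 'a) set \<Rightarrow> ('a \<times> 'a) set \<Rightarrow> bool" where
  "unimprovable P W R \<longleftrightarrow> \<not> (\<exists>R'. feasible W R' \<and> R' \<noteq> R \<and> more_aligned P R' R)"

definition regret_free :: "('a \<times> 'a) set \<Rightarrow> (('a \<times> 'a) list \<Rightarrow> 'a set) \<Rightarrow> bool" where
  "regret_free P \<sigma> \<longleftrightarrow> (\<forall>W R. tournament W \<longrightarrow> outcome \<sigma> W R \<longrightarrow> unimprovable P W R)"

definition misses_opportunity :: "('a \<times> 'a) set \<Rightarrow> ('a \<times> 'a) set \<Rightarrow> 'a \<Rightarrow> 'a \<Rightarrow> bool" where
  "misses_opportunity P R x y \<longleftrightarrow>
     (\<exists>z. (x, z) \<in> P \<and> (z, y) \<in> P \<and> (y, z) \<notin> R \<and> (z, x) \<notin> R)"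

definition takes_risk :: "('a \<times> 'a) set \<Rightarrow> ('a \<times> 'a) set \<Rightarrow> 'a \<Rightarrow> 'a \<Rightarrow> bool" where
  "takes_risk P R x y \<longleftrightarrow>
     (\<exists>z. ((z, y) \<in> P \<and> (x, z) \<in> R \<and> (y, z) \<notin> R) \<or>
          ((x, z) \<in> P \<and> (z, y) \<in> R \<and> (z, x) \<notin> R))"

definition on_path :: "(('a \<times> 'a) list \<Rightarrow> 'a set) \<Rightarrow> ('a \<times> 'a) list \<Rightarrow> bool" where
  "on_path \<sigma> h \<longleftrightarrow> \<not> terminal h \<and> (\<exists>W. tournament W \<and> gen \<sigma> W h)"

(* the offered pair is written {x,y} with x \<succ> y *)
definition never_misses :: "('a \<times> 'a) set \<Rightarrow> (('a \<times> 'a) list \<Rightarrow> 'a set) \<Rightarrow> bool" where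
  "never_misses P \<sigma> \<longleftrightarrow> (\<forall>h x y. on_path \<sigma> h \<longrightarrow> \<sigma> h = {x, y} \<longrightarrow> (x, y) \<in> P \<longrightarrow>
      \<not> misses_opportunity P (hist_rel h) x y)"

definition never_risks :: "('a \<times> 'a) set \<Rightarrow> (('a \<times> 'a) list \<Rightarrow> 'a set) \<Rightarrow> bool" where
  "never_risks P \<sigma> \<longleftrightarrow> (\<forall>h x y. on_path \<sigma> h \<longrightarrow> \<sigma> h = {x, y} \<longrightarrow> (x, y) \<in> P \<longrightarrow>
      \<not> takes_risk P (hist_rel h) x y)"

end

theory Submission
  imports Defs
begin


lemma gen_history: "gen \<sigma> W h \<Longrightarrow> history h"
  by (induction rule: gen.induct) (auto intro: history.intros)

lemma gen_set: "gen \<sigma> W h \<Longrightarrow> set h \<subseteq> W"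
  by (induction rule: gen.induct) auto

lemma gen_mono: "gen \<sigma> W h \<Longrightarrow> set h \<subseteq> W' \<Longrightarrow> gen \<sigma> W' h"
  by (induction rule: gen.induct) (auto intro: gen.intros)

lemma hist_snoc:
  "hist_rel (h @ [(x, y)]) = hist_rel h \<union> {(a, b). (a = x \<or> (a, x) \<in> hist_rel h) \<and> (b = y \<or> (y, b) \<in> hist_rel h)}"
  unfolding hist_rel_def
  by (auto simp: trancl_insert rtrancl_eq_or_trancl)

lemma hist_trans: "trans (hist_rel h)"
  unfolding hist_rel_def by simp

lemma history_irrefl: "history h \<Longrightarrow> (a, a) \<notin> hist_rel h"
proof (induction h arbitrary: a rule: history.induct)
  case Nil
  then show ?case by (simp add: hist_rel_def)
next
  case (snoc h x y)
  have t: "trans (hist_rel h)" by (rule hist_trans)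
  show ?case
  proof
    assume "(a, a) \<in> hist_rel (h @ [(x, y)])"
    then have "(a, a) \<in> hist_rel h \<or> ((a = x \<or> (a, x) \<in> hist_rel h) \<and> (a = y \<or> (y, a) \<in> hist_rel h))"
      by (simp add: hist_snoc)
    then show False using snoc t unfolding unranked_def trans_def by blast
  qed
qed



lemma play_ext:
  fixes \<sigma> :: "('a::finite \<times> 'a) list \<Rightarrow> 'a set"
  assumes str: "strategy \<sigma>" and tw: "tournament W"
  shows "gen \<sigma> W h \<Longrightarrow> \<exists>hf. gen \<sigma> W hf \<and> terminal hf \<and> hist_rel h \<subseteq> hist_rel hf"
proof (induction "card (- hist_rel h)" arbitrary: h rule: less_induct)
  case less
  show ?case
  proof (cases "terminal h")
    case True
    then show ?thesis using less.prems by blast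
  next
    case False
    have hh: "history h" using less.prems by (rule gen_history)
    obtain a b where ab: "\<sigma> h = {a, b}" "unranked (hist_rel h) a b"
      using str False hh unfolding strategy_def by blast
    have "(a, b) \<in> W \<or> (b, a) \<in> W" using tw ab(2) unfolding tournament_def total_on_def unranked_def by blast
    then obtain c d where cd: "\<sigma> h = {c, d}" "unranked (hist_rel h) c d" "(c, d) \<in> W"
      using ab by (metis insert_commute unranked_def)
    have g: "gen \<sigma> W (h @ [(c, d)])" using less.prems False cd by (auto intro: gen.intros)
    have sub: "hist_rel h \<subseteq> hist_rel (h @ [(c, d)])" by (auto simp: hist_snoc)
    have new: "(c, d) \<in> hist_rel (h @ [(c, d)])" "(c, d) \<notin> hist_rel h"
      using cd(2) by (auto simp: hist_snoc unranked_def)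
    have "- hist_rel (h @ [(c, d)]) \<subset> - hist_rel h" using sub new by blast
    then have "card (- hist_rel (h @ [(c, d)])) < card (- hist_rel h)"
      by (simp add: psubset_card_mono)
    then obtain hf where "gen \<sigma> W hf" "terminal hf" "hist_rel (h @ [(c, d)]) \<subseteq> hist_rel hf"
      using less.hyps g by blast
    then show ?thesis using sub by blast
  qed
qed



lemma exists_good:
  fixes R :: "('a::finite \<times> 'a) set"
  assumes irr: "irrefl R" and tr: "trans R" and tot: "total R"
    and adj: "\<And>u v. (u, v) \<in> R \<Longrightarrow> \<not> (\<exists>w. (u, w) \<in> R \<and> (w, v) \<in> R) \<Longrightarrow> (u, v) \<in> W"
    and HR: "H \<subseteq> R" and trH: "trans H" and nt: "\<not> total H"
  shows "\<exists>p. p \<in> R \<and> p \<in> W \<and> unranked H (fst p) (snd p)"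
proof -
  have main: "\<And>u v. card {w. (u, w) \<in> R \<and> (w, v) \<in> R} = n \<Longrightarrow> (u, v) \<in> R \<Longrightarrow> unranked H u v
      \<Longrightarrow> \<exists>p. p \<in> R \<and> p \<in> W \<and> unranked H (fst p) (snd p)" for n
  proof (induction n rule: less_induct)
    case (less n)
    show ?case
    proof (cases "\<exists>w. (u, w) \<in> R \<and> (w, v) \<in> R")
      case False
      then show ?thesis using adj less.prems by (metis fst_conv snd_conv)
    next
      case True
      then obtain w where w: "(u, w) \<in> R" "(w, v) \<in> R" by blast
      have uw: "unranked H u w \<or> unranked H w v"
      proof (rule ccontr)
        assume "\<not> (unranked H u w \<or> unranked H w v)"
        then have "((u, w) \<in> H \<or> (w, u) \<in> H) \<and> ((w, v) \<in> H \<or> (v, w) \<in> H)"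
          using w irr unfolding unranked_def irrefl_def by auto
        moreover have "(w, u) \<notin> H" "(v, w) \<notin> H" using w HR irr tr unfolding irrefl_def trans_def by blast+
        ultimately have "(u, w) \<in> H" "(w, v) \<in> H" by auto
        then have "(u, v) \<in> H" using trH unfolding trans_def by blast
        then show False using less.prems unfolding unranked_def by blast
      qed
      have wR: "(w, w) \<notin> R" using irr unfolding irrefl_def by blast
      have trR: "(a, b) \<in> R \<Longrightarrow> (b, c) \<in> R \<Longrightarrow> (a, c) \<in> R" for a b c
        using tr unfolding trans_def by blast
      have s1: "{w'. (u, w') \<in> R \<and> (w', w) \<in> R} \<subset> {w'. (u, w') \<in> R \<and> (w', v) \<in> R}"
      proof
        show "{w'. (u, w') \<in> R \<and> (w', w) \<in> R} \<subseteq> {w'. (u, w') \<in> R \<and> (w', v) \<in> R}"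
          using trR w by blast
        show "{w'. (u, w') \<in> R \<and> (w', w) \<in> R} \<noteq> {w'. (u, w') \<in> R \<and> (w', v) \<in> R}"
          using w wR by blast
      qed
      have s2: "{w'. (w, w') \<in> R \<and> (w', v) \<in> R} \<subset> {w'. (u, w') \<in> R \<and> (w', v) \<in> R}"
      proof
        show "{w'. (w, w') \<in> R \<and> (w', v) \<in> R} \<subseteq> {w'. (u, w') \<in> R \<and> (w', v) \<in> R}"
          using trR w by blast
        show "{w'. (w, w') \<in> R \<and> (w', v) \<in> R} \<noteq> {w'. (u, w') \<in> R \<and> (w', v) \<in> R}"
          using w wR by blast
      qed
      have c1: "card {w'. (u, w') \<in> R \<and> (w', w) \<in> R} < n"
        using psubset_card_mono[OF finite s1] less.prems(1) by simp
      have c2: "card {w'. (w, w') \<in> R \<and> (w', v) \<in> R} < n"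
        using psubset_card_mono[OF finite s2] less.prems(1) by simp
      show ?thesis
      proof (cases "unranked H u w")
        case True
        show ?thesis by (rule less.IH[OF c1 refl w(1) True])
      next
        case False
        then have "unranked H w v" using uw by blast
        then show ?thesis by (rule less.IH[OF c2 refl w(2)])
      qed
    qed
  qed
  obtain u v where uv: "u \<noteq> v" "(u, v) \<notin> H" "(v, u) \<notin> H" using nt unfolding total_on_def by blast
  then have "(u, v) \<in> R \<and> unranked H u v \<or> (v, u) \<in> R \<and> unranked H v u"
    using tot unfolding total_on_def unranked_def by blast
  then show ?thesis using main[OF refl] by blast
qed

definition fstrat :: "('a \<times> 'a) set \<Rightarrow> ('a \<times> 'a) set \<Rightarrow> ('a \<times> 'a) list \<Rightarrow> 'a set" where
  "fstrat R W h = (if \<exists>p. p \<in> R \<and> p \<in> W \<and> unranked (hist_rel h) (fst p) (snd p)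
     then (let p = SOME p. p \<in> R \<and> p \<in> W \<and> unranked (hist_rel h) (fst p) (snd p) in {fst p, snd p})
     else (let p = SOME p. unranked (hist_rel h) (fst p) (snd p) in {fst p, snd p}))"

lemma fstrat_strategy: "strategy (fstrat R W)"
  unfolding strategy_def
proof (intro allI impI)
  fix h :: "('a \<times> 'a) list"
  assume a: "history h \<and> \<not> terminal h"
  show "\<exists>x y. fstrat R W h = {x, y} \<and> unranked (hist_rel h) x y"
  proof (cases "\<exists>p. p \<in> R \<and> p \<in> W \<and> unranked (hist_rel h) (fst p) (snd p)")
    case True
    then show ?thesis unfolding fstrat_def Let_def by (simp, metis (mono_tags, lifting) someI_ex)
  next
    case False
    have "\<exists>p. unranked (hist_rel h) (fst p) (snd p)"
      using a unfolding terminal_def total_on_def unranked_def by auto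
    then show ?thesis using False unfolding fstrat_def Let_def by (simp, metis (mono_tags, lifting) someI_ex)
  qed
qed

lemma feasible_adj:
  fixes R :: "('a::finite \<times> 'a) set"
  assumes irr: "irrefl R" and tr: "trans R" and tot: "total R" and tw: "tournament W"
    and adj: "\<And>u v. (u, v) \<in> R \<Longrightarrow> \<not> (\<exists>w. (u, w) \<in> R \<and> (w, v) \<in> R) \<Longrightarrow> (u, v) \<in> W"
  shows "feasible W R"
proof -
  have asW: "(a, b) \<in> W \<Longrightarrow> (b, a) \<notin> W" for a b using tw unfolding tournament_def asym_iff by blast
  have inv: "gen (fstrat R W) W h \<Longrightarrow> hist_rel h \<subseteq> R" for h
  proof (induction rule: gen.induct)
    case Nil
    then show ?case by (simp add: hist_rel_def)
  next
    case (step h x y)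
    have ex: "\<exists>p. p \<in> R \<and> p \<in> W \<and> unranked (hist_rel h) (fst p) (snd p)"
      using exists_good[OF irr tr tot adj step.IH hist_trans] step.hyps(2) unfolding terminal_def by blast
    define p where "p = (SOME p. p \<in> R \<and> p \<in> W \<and> unranked (hist_rel h) (fst p) (snd p))"
    have p: "p \<in> R" "p \<in> W" using someI_ex[OF ex] unfolding p_def by auto
    have "fstrat R W h = {fst p, snd p}" using ex unfolding fstrat_def p_def Let_def by simp
    then have "{x, y} = {fst p, snd p}" using step.hyps(3) by simp
    then have "(x, y) = p \<or> (y, x) = p" by (cases p) (auto simp: doubleton_eq_iff)
    then have "(x, y) \<in> R" using p step.hyps(5) asW by blast
    then show ?case using step.IH tr unfolding hist_snoc trans_def by blast
  qed
  obtain hf where hf: "gen (fstrat R W) W hf" "terminal hf"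
    using play_ext[OF fstrat_strategy tw gen.Nil] by blast
  have sub: "hist_rel hf \<subseteq> R" using inv[OF hf(1)] .
  have "R \<subseteq> hist_rel hf"
  proof
    fix p assume pR: "p \<in> R"
    obtain a b where p: "p = (a, b)" by (cases p)
    have "a \<noteq> b" using pR p irr unfolding irrefl_def by blast
    then have "(a, b) \<in> hist_rel hf \<or> (b, a) \<in> hist_rel hf" using hf(2) unfolding terminal_def total_on_def by blast
    moreover have "(b, a) \<notin> R" using pR p irr tr unfolding irrefl_def trans_def by blast
    ultimately show "p \<in> hist_rel hf" using sub p by blast
  qed
  then have "hist_rel hf = R" using sub by blast
  then show ?thesis unfolding feasible_def outcome_def using fstrat_strategy hf by blast
qed



definition conv :: "('a \<times> 'a) set \<Rightarrow> ('a \<times> 'a) set \<Rightarrow> bool" where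
  "conv P S \<longleftrightarrow> (\<forall>u v w. (u, v) \<in> S \<longrightarrow> (v, u) \<in> P \<longrightarrow> (v, w) \<in> P \<longrightarrow> (w, u) \<in> P \<longrightarrow>
      (u, w) \<in> S \<or> (w, v) \<in> S)"

lemma agree_new:
  assumes trP: "trans P" and asP: "\<And>a b. (a, b) \<in> P \<Longrightarrow> (b, a) \<notin> P"
    and totP: "\<And>a b. a \<noteq> b \<Longrightarrow> (a, b) \<in> P \<or> (b, a) \<in> P"
    and trS: "trans S" and cv: "conv P S" and xy: "(x, y) \<in> P" and un: "unranked S x y"
    and nu: "u = x \<or> (u, x) \<in> S" and nv: "v = y \<or> (y, v) \<in> S" and vu: "(v, u) \<in> P"
  shows "(u, v) \<in> S"
proof -
  have tS: "(a, b) \<in> S \<Longrightarrow> (b, c) \<in> S \<Longrightarrow> (a, c) \<in> S" for a b c using trS unfolding trans_def by blast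
  have tP: "(a, b) \<in> P \<Longrightarrow> (b, c) \<in> P \<Longrightarrow> (a, c) \<in> P" for a b c using trP unfolding trans_def by blast
  have cv': "(a, b) \<in> S \<Longrightarrow> (b, a) \<in> P \<Longrightarrow> (b, c) \<in> P \<Longrightarrow> (c, a) \<in> P \<Longrightarrow> (a, c) \<in> S \<or> (c, b) \<in> S" for a b c
    using cv unfolding conv_def by blast
  have yx: "(y, x) \<notin> S" "(x, y) \<notin> S" using un unfolding unranked_def by auto
  show ?thesis
  proof (cases "u = x")
    case True
    show ?thesis
    proof (cases "v = y")
      case True
      then show ?thesis using \<open>u = x\<close> vu xy asP by blast
    next
      case False
      then have yv: "(y, v) \<in> S" using nv by blast
      have "(v, x) \<in> P" using vu True by simp
      then have "(v, y) \<in> P" using tP xy by blast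
      then have "(y, x) \<in> S \<or> (x, v) \<in> S" using cv'[OF yv] \<open>(v, x) \<in> P\<close> xy by blast
      then show ?thesis using yx True by blast
    qed
  next
    case False
    then have ux: "(u, x) \<in> S" using nu by blast
    show ?thesis
    proof (cases "v = y")
      case True
      have "(y, u) \<in> P" using vu True by simp
      then have "(x, u) \<in> P" using tP xy by blast
      then have "(u, y) \<in> S \<or> (y, x) \<in> S" using cv'[OF ux] xy \<open>(y, u) \<in> P\<close> by blast
      then show ?thesis using yx True by blast
    next
      case False
      then have yv: "(y, v) \<in> S" using nv by blast
      have uy: "u \<noteq> y" using ux yx by blast
      have ux': "u \<noteq> x" using \<open>u \<noteq> x\<close> .
      show ?thesis
      proof (cases "(x, u) \<in> P")
        case True
        show ?thesis
        proof (cases "(y, u) \<in> P")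
          case True
          have "(u, y) \<in> S \<or> (y, x) \<in> S" using cv'[OF ux \<open>(x, u) \<in> P\<close> xy True] .
          then show ?thesis using yx yv tS by blast
        next
          case False
          then have "(u, y) \<in> P" using totP uy by blast
          have "(v, y) \<in> P" using tP vu \<open>(u, y) \<in> P\<close> by blast
          have "(y, u) \<in> S \<or> (u, v) \<in> S" using cv'[OF yv \<open>(v, y) \<in> P\<close> vu \<open>(u, y) \<in> P\<close>] .
          then show ?thesis using yx ux tS by blast
        qed
      next
        case False
        then have "(u, x) \<in> P" using totP ux' by blast
        have "(v, x) \<in> P" using tP vu \<open>(u, x) \<in> P\<close> by blast
        have "(v, y) \<in> P" using tP \<open>(v, x) \<in> P\<close> xy by blast
        have "(y, x) \<in> S \<or> (x, v) \<in> S" using cv'[OF yv \<open>(v, y) \<in> P\<close> \<open>(v, x) \<in> P\<close> xy] .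
        then show ?thesis using yx ux tS by blast
      qed
    qed
  qed
qed

lemma upset_new:
  assumes trP: "trans P" and asP: "\<And>a b. (a, b) \<in> P \<Longrightarrow> (b, a) \<notin> P"
    and totP: "\<And>a b. a \<noteq> b \<Longrightarrow> (a, b) \<in> P \<or> (b, a) \<in> P"
    and trS: "trans S" and xy: "(x, y) \<in> P" and un: "unranked S x y"
    and nr: "\<not> takes_risk P S x y"
    and nu: "u = y \<or> (u, y) \<in> S" and nv: "v = x \<or> (x, v) \<in> S" and vu: "(v, u) \<in> P"
  shows "(u, v) \<in> S \<or> (u = y \<and> v = x)"
proof -
  have tS: "(a, b) \<in> S \<Longrightarrow> (b, c) \<in> S \<Longrightarrow> (a, c) \<in> S" for a b c using trS unfolding trans_def by blast
  have tP: "(a, b) \<in> P \<Longrightarrow> (b, c) \<in> P \<Longrightarrow> (a, c) \<in> P" for a b c using trP unfolding trans_def by blast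
  have ra: "(z, y) \<in> P \<Longrightarrow> (x, z) \<in> S \<Longrightarrow> (y, z) \<in> S" for z using nr unfolding takes_risk_def by blast
  have rb: "(x, z) \<in> P \<Longrightarrow> (z, y) \<in> S \<Longrightarrow> (z, x) \<in> S" for z using nr unfolding takes_risk_def by blast
  have yx: "(y, x) \<notin> S" "(x, y) \<notin> S" using un unfolding unranked_def by auto
  show ?thesis
  proof (cases "u = y")
    case True
    show ?thesis
    proof (cases "v = x")
      case True
      then show ?thesis using \<open>u = y\<close> by blast
    next
      case False
      then have xv: "(x, v) \<in> S" using nv by blast
      have "(y, v) \<in> S" using ra[OF _ xv] vu True by blast
      then show ?thesis using True by blast
    qed
  next
    case False
    then have uy: "(u, y) \<in> S" using nu by blast
    show ?thesis
    proof (cases "v = x")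
      case True
      have "(x, u) \<in> P" using vu True by simp
      then show ?thesis using rb uy True by blast
    next
      case False
      then have xv: "(x, v) \<in> S" using nv by blast
      show ?thesis
      proof (cases "(v, y) \<in> P")
        case True
        then show ?thesis using ra xv uy tS by blast
      next
        case False
        have "v \<noteq> y" using xv yx by blast
        then have "(y, v) \<in> P" using totP False by blast
        then have "(y, u) \<in> P" using tP vu by blast
        then have "(x, u) \<in> P" using tP xy by blast
        then show ?thesis using rb uy xv tS by blast
      qed
    qed
  qed
qed


definition direct :: "('a \<times> 'a) set \<Rightarrow> ('a \<times> 'a) set \<Rightarrow> ('a \<times> 'a) set \<Rightarrow> bool" where
  "direct P S T \<longleftrightarrow> (\<forall>u v. (u, v) \<in> S \<longrightarrow> (v, u) \<in> P \<longrightarrow> (u, v) \<in> T)"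

lemma inv_step:
  assumes trP: "trans P" and asP: "\<And>a b. (a, b) \<in> P \<Longrightarrow> (b, a) \<notin> P"
    and totP: "\<And>a b. a \<noteq> b \<Longrightarrow> (a, b) \<in> P \<or> (b, a) \<in> P"
    and cv: "conv P (hist_rel h)" and dr: "direct P (hist_rel h) T"
    and un: "unranked (hist_rel h) a b" and ab: "{x, y} = {a, b}" and xy: "(x, y) \<in> P"
    and nm: "\<not> misses_opportunity P (hist_rel h) x y" and nr: "\<not> takes_risk P (hist_rel h) x y"
  shows "conv P (hist_rel (h @ [(a, b)])) \<and> direct P (hist_rel (h @ [(a, b)])) (insert (a, b) T)"
proof -
  let ?S = "hist_rel h"
  have trS: "trans ?S" by (rule hist_trans)
  have xny: "x \<noteq> y" using xy asP by blast
  have ab2: "(a, b) = (x, y) \<or> (a, b) = (y, x)" using ab xny by (auto simp: doubleton_eq_iff)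
  have unxy: "unranked ?S x y" using un ab2 unfolding unranked_def by auto
  have K: "(u, v) \<in> ?S \<or> (u = y \<and> v = x \<and> (a, b) = (y, x))"
    if uv: "(u, v) \<in> hist_rel (h @ [(a, b)])" and vu: "(v, u) \<in> P" for u v
  proof -
    have c: "(u, v) \<in> ?S \<or> ((u = a \<or> (u, a) \<in> ?S) \<and> (v = b \<or> (b, v) \<in> ?S))"
      using uv by (simp add: hist_snoc)
    show ?thesis
    proof (cases "(u, v) \<in> ?S")
      case True then show ?thesis by blast
    next
      case False
      then have nn: "(u = a \<or> (u, a) \<in> ?S)" "(v = b \<or> (b, v) \<in> ?S)" using c by auto
      show ?thesis using ab2
      proof
        assume e: "(a, b) = (x, y)"
        then show ?thesis using agree_new[OF trP asP totP trS cv xy unxy _ _ vu] nn by auto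
      next
        assume e: "(a, b) = (y, x)"
        then show ?thesis using upset_new[OF trP asP totP trS xy unxy nr _ _ vu] nn by auto
      qed
    qed
  qed
  have sub: "?S \<subseteq> hist_rel (h @ [(a, b)])" by (auto simp: hist_snoc)
  have nm': "(x, w) \<in> P \<Longrightarrow> (w, y) \<in> P \<Longrightarrow> (y, w) \<in> ?S \<or> (w, x) \<in> ?S" for w
    using nm unfolding misses_opportunity_def by blast
  have "conv P (hist_rel (h @ [(a, b)]))"
    unfolding conv_def
  proof (intro allI impI)
    fix u v w
    assume a1: "(u, v) \<in> hist_rel (h @ [(a, b)])" and a2: "(v, u) \<in> P" and a3: "(v, w) \<in> P" and a4: "(w, u) \<in> P"
    from K[OF a1 a2] show "(u, w) \<in> hist_rel (h @ [(a, b)]) \<or> (w, v) \<in> hist_rel (h @ [(a, b)])"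
    proof
      assume "(u, v) \<in> ?S"
      then have "(u, w) \<in> ?S \<or> (w, v) \<in> ?S" using cv a2 a3 a4 unfolding conv_def by blast
      then show ?thesis using sub by blast
    next
      assume "u = y \<and> v = x \<and> (a, b) = (y, x)"
      then show ?thesis using nm' a3 a4 sub by blast
    qed
  qed
  moreover have "direct P (hist_rel (h @ [(a, b)])) (insert (a, b) T)"
    unfolding direct_def
  proof (intro allI impI)
    fix u v
    assume a1: "(u, v) \<in> hist_rel (h @ [(a, b)])" and a2: "(v, u) \<in> P"
    from K[OF a1 a2] show "(u, v) \<in> insert (a, b) T"
      using dr a2 unfolding direct_def by auto
  qed
  ultimately show ?thesis by blast
qed

lemma ranking_props:
  assumes "ranking P"
  shows "trans P" "\<And>a b. (a, b) \<in> P \<Longrightarrow> (b, a) \<notin> P" "\<And>a b. a \<noteq> b \<Longrightarrow> (a, b) \<in> P \<or> (b, a) \<in> P"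
    "\<And>a. (a, a) \<notin> P"
  using assms unfolding ranking_def proto_ranking_def irrefl_def trans_def total_on_def by blast+

lemma orient:
  assumes "ranking P" "x \<noteq> y"
  obtains "(x, y) \<in> P" | "(y, x) \<in> P"
  using ranking_props[OF assms(1)] assms(2) by blast

lemma inv_gen:
  assumes rk: "ranking P" and nm: "never_misses P \<sigma>" and nr: "never_risks P \<sigma>" and tw: "tournament W"
  shows "gen \<sigma> W h \<Longrightarrow> conv P (hist_rel h) \<and> direct P (hist_rel h) (set h)"
proof (induction rule: gen.induct)
  case Nil
  then show ?case by (simp add: conv_def direct_def hist_rel_def)
next
  case (step h x y)
  have op: "on_path \<sigma> h" unfolding on_path_def using step.hyps tw by blast
  have xy: "x \<noteq> y" using step.hyps(4) unfolding unranked_def by blast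
  have r: "conv P (hist_rel (h @ [(x, y)])) \<and> direct P (hist_rel (h @ [(x, y)])) (insert (x, y) (set h))"
  proof (cases rule: orient[OF rk xy])
    case 1
    then show ?thesis
      using inv_step[OF ranking_props(1-3)[OF rk], where a=x and b=y and x=x and y=y and T="set h" and h=h] step.IH step.hyps(4)
        nm nr op step.hyps(3) unfolding never_misses_def never_risks_def by blast
  next
    case 2
    have e: "\<sigma> h = {y, x}" using step.hyps(3) by (simp add: insert_commute)
    show ?thesis
      using inv_step[OF ranking_props(1-3)[OF rk], where a=x and b=y and x=y and y=x and T="set h" and h=h] step.IH 2 step.hyps(4)
        nm nr op e unfolding never_misses_def never_risks_def by (simp add: insert_commute)
  qed
  then show ?case by simp
qed


lemma chain_flip:
  assumes "(a, b) \<in> trancl E" and "(b, a) \<in> R" and trR: "trans R" and totR: "total R"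
  shows "\<exists>c d. (c, d) \<in> E \<and> (d, c) \<in> R"
  using assms(1,2)
proof (induction rule: trancl_induct)
  case (base y)
  then show ?case by blast
next
  case (step y z)
  show ?case
  proof (cases "(y, a) \<in> R")
    case True
    then show ?thesis using step.IH by blast
  next
    case False
    show ?thesis
    proof (cases "a = y")
      case True
      then show ?thesis using step by blast
    next
      case False
      then have "(a, y) \<in> R" using \<open>(y, a) \<notin> R\<close> totR unfolding total_on_def by blast
      then have "(z, y) \<in> R" using step.prems trR unfolding trans_def by blast
      then show ?thesis using step.hyps(2) by blast
    qed
  qed
qed

lemma if_dir:
  fixes P :: "('a::finite \<times> 'a) set"
  assumes rk: "ranking P" and nm: "never_misses P \<sigma>" and nr: "never_risks P \<sigma>"
  shows "regret_free P \<sigma>"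
  unfolding regret_free_def
proof (intro allI impI)
  fix W R
  assume tw: "tournament W" and oc: "outcome \<sigma> W R"
  obtain h where h: "gen \<sigma> W h" "terminal h" "hist_rel h = R" using oc unfolding outcome_def by blast
  have dr: "direct P R (set h)" using inv_gen[OF rk nm nr tw h(1)] h(3) by simp
  have irR: "(a, a) \<notin> R" for a using history_irrefl[OF gen_history[OF h(1)]] h(3) by simp
  have trR: "trans R" using hist_trans h(3) by metis
  have totR: "total R" using h(2,3) unfolding terminal_def by simp
  have asW: "(a, b) \<in> W \<Longrightarrow> (b, a) \<notin> W" for a b using tw unfolding tournament_def asym_iff by blast
  show "unimprovable P W R"
    unfolding unimprovable_def
  proof
    assume "\<exists>R'. feasible W R' \<and> R' \<noteq> R \<and> more_aligned P R' R"
    then obtain R' where fe: "feasible W R'" and ne: "R' \<noteq> R" and ma: "more_aligned P R' R" by blast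
    obtain \<sigma>' h' where h': "gen \<sigma>' W h'" "terminal h'" "hist_rel h' = R'"
      using fe unfolding feasible_def outcome_def by blast
    have irR': "(a, a) \<notin> R'" for a using history_irrefl[OF gen_history[OF h'(1)]] h'(3) by simp
    have trR': "trans R'" using hist_trans h'(3) by metis
    have totR': "total R'" using h'(2,3) unfolding terminal_def by simp
    have "\<not> R \<subseteq> R'"
    proof
      assume sub: "R \<subseteq> R'"
      have "R' \<subseteq> R"
      proof
        fix p assume pR': "p \<in> R'"
        obtain c d where p: "p = (c, d)" by (cases p)
        have "c \<noteq> d" using pR' p irR' by blast
        then have "(c, d) \<in> R \<or> (d, c) \<in> R" using totR unfolding total_on_def by blast
        moreover have "(d, c) \<notin> R'" using pR' p irR' trR' unfolding trans_def by blast
        ultimately show "p \<in> R" using sub p by blast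
      qed
      then show False using sub ne by blast
    qed
    then obtain b a where ba: "(b, a) \<in> R" "(b, a) \<notin> R'" by auto
    have "a \<noteq> b" using ba irR by blast
    then have abR': "(a, b) \<in> trancl (set h')" using ba totR' h'(3) unfolding total_on_def hist_rel_def by blast
    obtain c d where cd: "(c, d) \<in> set h'" "(d, c) \<in> R" using chain_flip[OF abR' ba(1) trR totR] by blast
    have cdW: "(c, d) \<in> W" using cd(1) gen_set[OF h'(1)] by blast
    have cdR': "(c, d) \<in> R'" using cd(1) h'(3) unfolding hist_rel_def by blast
    show False
    proof (cases "(d, c) \<in> P")
      case True
      then have "(d, c) \<in> R'" using ma cd(2) unfolding more_aligned_def by blast
      then show False using cdR' trR' irR' unfolding trans_def by blast
    next
      case False
      have "c \<noteq> d" using cd(2) irR by blast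
      then have "(c, d) \<in> P" using False ranking_props(3)[OF rk] by blast
      then have "(d, c) \<in> set h" using dr cd(2) unfolding direct_def by blast
      then have "(d, c) \<in> W" using gen_set[OF h(1)] by blast
      then show False using asW cdW by blast
    qed
  qed
qed


lemma L_trans:
  assumes rk: "ranking P" and irS: "\<And>a. (a, a) \<notin> S" and trS: "trans S" and cv: "conv P S"
  shows "trans (S \<union> {(u, v). (u, v) \<in> P \<and> unranked S u v})"
proof -
  note Pp = ranking_props[OF rk]
  have tS: "(a, b) \<in> S \<Longrightarrow> (b, c) \<in> S \<Longrightarrow> (a, c) \<in> S" for a b c using trS unfolding trans_def by blast
  have tP: "(a, b) \<in> P \<Longrightarrow> (b, c) \<in> P \<Longrightarrow> (a, c) \<in> P" for a b c using Pp(1) unfolding trans_def by blast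
  have cv': "(a, b) \<in> S \<Longrightarrow> (b, a) \<in> P \<Longrightarrow> (b, c) \<in> P \<Longrightarrow> (c, a) \<in> P \<Longrightarrow> (a, c) \<in> S \<or> (c, b) \<in> S" for a b c
    using cv unfolding conv_def by blast
  let ?L = "S \<union> {(u, v). (u, v) \<in> P \<and> unranked S u v}"
  show ?thesis unfolding trans_def
  proof (intro allI impI)
    fix u v w
    assume uv: "(u, v) \<in> ?L" and vw: "(v, w) \<in> ?L"
    show "(u, w) \<in> ?L"
    proof (cases "(u, v) \<in> S")
      case uvS: True
      show ?thesis
      proof (cases "(v, w) \<in> S")
        case True
        then show ?thesis using uvS tS by blast
      next
        case False
        then have vwP: "(v, w) \<in> P" and unvw: "unranked S v w" using vw by auto
        show ?thesis
        proof (cases "(u, w) \<in> S \<or> (w, u) \<in> S")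
          case True
          have "(w, u) \<notin> S" using uvS tS unvw unfolding unranked_def by blast
          then show ?thesis using True by blast
        next
          case False
          have "u \<noteq> w" using unvw uvS unfolding unranked_def by blast
          have "(u, w) \<in> P"
          proof (rule ccontr)
            assume nuw: "(u, w) \<notin> P"
            then have wu: "(w, u) \<in> P" using Pp(3) \<open>u \<noteq> w\<close> by blast
            have "(v, u) \<in> P" using tP vwP wu by blast
            then have "(u, w) \<in> S \<or> (w, v) \<in> S" using cv'[OF uvS _ vwP wu] by blast
            then show False using False unvw unfolding unranked_def by blast
          qed
          then show ?thesis using False \<open>u \<noteq> w\<close> unfolding unranked_def by blast
        qed
      qed
    next
      case uvnS: False
      then have uvP: "(u, v) \<in> P" and unuv: "unranked S u v" using uv by auto
      show ?thesis
      proof (cases "(v, w) \<in> S")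
        case vwS: True
        show ?thesis
        proof (cases "(u, w) \<in> S \<or> (w, u) \<in> S")
          case True
          have "(w, u) \<notin> S" using vwS tS unuv unfolding unranked_def by blast
          then show ?thesis using True by blast
        next
          case False
          have "u \<noteq> w" using unuv vwS unfolding unranked_def by blast
          have "(u, w) \<in> P"
          proof (rule ccontr)
            assume nuw: "(u, w) \<notin> P"
            then have wu: "(w, u) \<in> P" using Pp(3) \<open>u \<noteq> w\<close> by blast
            have "(w, v) \<in> P" using tP wu uvP by blast
            then have "(v, u) \<in> S \<or> (u, w) \<in> S" using cv'[OF vwS _ wu uvP] by blast
            then show False using False unuv unfolding unranked_def by blast
          qed
          then show ?thesis using False \<open>u \<noteq> w\<close> unfolding unranked_def by blast
        qed
      next
        case False
        then have vwP: "(v, w) \<in> P" and unvw: "unranked S v w" using vw by auto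
        have uwP: "(u, w) \<in> P" using tP uvP vwP by blast
        show ?thesis
        proof (cases "(w, u) \<in> S")
          case True
          have "(w, v) \<in> S \<or> (v, u) \<in> S" using cv'[OF True _ uvP vwP] uwP by blast
          then show ?thesis using unuv unvw unfolding unranked_def by blast
        next
          case False
          have "u \<noteq> w" using uwP Pp(4) by blast
          then show ?thesis using False uwP unfolding unranked_def by blast
        qed
      qed
    qed
  qed
qed

definition bad :: "('a \<times> 'a) set \<Rightarrow> (('a \<times> 'a) list \<Rightarrow> 'a set) \<Rightarrow> ('a \<times> 'a) list \<Rightarrow> bool" where
  "bad P \<sigma> h \<longleftrightarrow> (\<exists>x y. \<sigma> h = {x, y} \<and> (x, y) \<in> P \<and> (misses_opportunity P (hist_rel h) x y \<or> takes_risk P (hist_rel h) x y))"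

lemma first_bad:
  assumes rk: "ranking P"
  shows "gen \<sigma> W h \<Longrightarrow> (\<exists>h'. gen \<sigma> W h' \<and> \<not> terminal h' \<and> bad P \<sigma> h' \<and> conv P (hist_rel h')) \<or> conv P (hist_rel h)"
proof (induction rule: gen.induct)
  case Nil
  then show ?case by (simp add: conv_def hist_rel_def)
next
  case (step h x y)
  show ?case
  proof (cases "(\<exists>h'. gen \<sigma> W h' \<and> \<not> terminal h' \<and> bad P \<sigma> h' \<and> conv P (hist_rel h'))")
    case True
    then show ?thesis by blast
  next
    case False
    then have cvh: "conv P (hist_rel h)" using step.IH by blast
    show ?thesis
    proof (cases "bad P \<sigma> h")
      case True
      then show ?thesis using step.hyps(1,2) cvh by blast
    next
      case False
      have dr: "direct P (hist_rel h) UNIV" by (simp add: direct_def)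
      have xy: "x \<noteq> y" using step.hyps(4) unfolding unranked_def by blast
      have "conv P (hist_rel (h @ [(x, y)]))"
      proof (cases rule: orient[OF rk xy])
        case 1
        then show ?thesis
          using inv_step[OF ranking_props(1-3)[OF rk], where a=x and b=y and x=x and y=y and T=UNIV and h=h]
            cvh dr step.hyps(3,4) False unfolding bad_def by blast
      next
        case 2
        have e: "\<sigma> h = {y, x}" using step.hyps(3) by (simp add: insert_commute)
        show ?thesis
          using inv_step[OF ranking_props(1-3)[OF rk], where a=x and b=y and x=y and y=x and T=UNIV and h=h]
            cvh dr step.hyps(4) 2 e False unfolding bad_def by (simp add: insert_commute)
      qed
      then show ?thesis by blast
    qed
  qed
qed

lemma core:
  fixes P :: "('a::finite \<times> 'a) set"
  assumes rk: "ranking P" and str: "strategy \<sigma>" and rf: "regret_free P \<sigma>"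
    and g: "gen \<sigma> W0 h" and nt: "\<not> terminal h" and cv: "conv P (hist_rel h)"
    and sx: "\<sigma> h = {x, y}" and xy: "(x, y) \<in> P"
    and mr: "misses_opportunity P (hist_rel h) x y \<or> takes_risk P (hist_rel h) x y"
  shows False
proof -
  note Pp = ranking_props[OF rk]
  let ?S = "hist_rel h"
  define L where "L = ?S \<union> {(u, v). (u, v) \<in> P \<and> unranked ?S u v}"
  have irS: "(a, a) \<notin> ?S" for a using history_irrefl[OF gen_history[OF g]] .
  have trS: "trans ?S" by (rule hist_trans)
  have trL: "trans L" unfolding L_def using L_trans[OF rk irS trS cv] .
  have irL: "irrefl L" unfolding L_def irrefl_def using irS Pp(4) by blast
  have totL: "total L" unfolding L_def total_on_def unranked_def using Pp(3) by blast
  have asL: "(a, b) \<in> L \<Longrightarrow> (b, a) \<notin> L" for a b using trL irL unfolding trans_def irrefl_def by blast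
  obtain a b where ab: "\<sigma> h = {a, b}" "unranked ?S a b"
    using str nt gen_history[OF g] unfolding strategy_def by blast
  have unxy: "unranked ?S x y" using ab sx unfolding unranked_def by (auto simp: doubleton_eq_iff)
  have xyL: "(x, y) \<in> L" using xy unxy unfolding L_def by blast
  obtain z where z: "(x, z) \<in> L" "(z, y) \<in> L"
  proof -
    from mr show ?thesis
    proof
      assume "misses_opportunity P ?S x y"
      then obtain z where "(x, z) \<in> P" "(z, y) \<in> P" "(y, z) \<notin> ?S" "(z, x) \<notin> ?S"
        unfolding misses_opportunity_def by blast
      then show ?thesis using that unfolding L_def unranked_def by (metis (mono_tags, lifting) CollectI Pp(4) UnI1 UnI2 case_prodI)
    next
      assume "takes_risk P ?S x y"
      then obtain z where "((z, y) \<in> P \<and> (x, z) \<in> ?S \<and> (y, z) \<notin> ?S) \<or> ((x, z) \<in> P \<and> (z, y) \<in> ?S \<and> (z, x) \<notin> ?S)"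
        unfolding takes_risk_def by blast
      then show ?thesis using that unfolding L_def unranked_def by (metis (mono_tags, lifting) CollectI Pp(4) UnI1 UnI2 case_prodI)
    qed
  qed
  define W where "W = (L - {(x, y)}) \<union> {(y, x)}"
  have tw: "tournament W"
    unfolding tournament_def W_def total_on_def asym_iff
    using totL asL xyL unfolding total_on_def by blast
  have setS: "set h \<subseteq> ?S" unfolding hist_rel_def by auto
  have "set h \<subseteq> W" unfolding W_def L_def using setS unxy unfolding unranked_def by blast
  then have g1: "gen \<sigma> W h" using gen_mono[OF g] by blast
  have g2: "gen \<sigma> W (h @ [(y, x)])"
    by (rule gen.step[OF g1 nt]) (use sx unxy in \<open>auto simp: insert_commute unranked_def W_def\<close>)
  obtain hf where hf: "gen \<sigma> W hf" "terminal hf" "hist_rel (h @ [(y, x)]) \<subseteq> hist_rel hf"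
    using play_ext[OF str tw g2] by blast
  define R where "R = hist_rel hf"
  have yxR: "(y, x) \<in> R" using hf(3) unfolding R_def by (auto simp: hist_snoc)
  have SR: "?S \<subseteq> R" using hf(3) unfolding R_def by (auto simp: hist_snoc)
  have irR: "(a, a) \<notin> R" for a unfolding R_def using history_irrefl[OF gen_history[OF hf(1)]] .
  have trR: "trans R" unfolding R_def by (rule hist_trans)
  have un: "unimprovable P W R" using rf tw hf(1,2) unfolding regret_free_def outcome_def R_def by blast
  have adj: "(u, v) \<in> W" if "(u, v) \<in> L" "\<not> (\<exists>w. (u, w) \<in> L \<and> (w, v) \<in> L)" for u v
    using that z unfolding W_def by blast
  have fe: "feasible W L" using feasible_adj[OF irL trL totL tw adj] by blast
  have ne: "L \<noteq> R" using xyL yxR irR trR unfolding trans_def by blast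
  have ma: "more_aligned P L R"
    unfolding more_aligned_def
  proof (intro allI impI)
    fix a b assume abP: "(a, b) \<in> P" and abR: "(a, b) \<in> R"
    show "(a, b) \<in> L"
    proof (rule ccontr)
      assume "(a, b) \<notin> L"
      moreover have "a \<noteq> b" using abR irR by blast
      ultimately have "(b, a) \<in> L" using totL unfolding total_on_def by blast
      then have "(b, a) \<in> ?S" using abP Pp(2) unfolding L_def by blast
      then have "(b, a) \<in> R" using SR by blast
      then show False using abR irR trR unfolding trans_def by blast
    qed
  qed
  show False using un fe ne ma unfolding unimprovable_def by blast
qed

lemma only_if_dir:
  fixes P :: "('a::finite \<times> 'a) set"
  assumes rk: "ranking P" and str: "strategy \<sigma>" and rf: "regret_free P \<sigma>"
  shows "never_misses P \<sigma> \<and> never_risks P \<sigma>"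
proof -
  have nb: False if op: "on_path \<sigma> h" and b: "bad P \<sigma> h" for h
  proof -
    obtain W where tw: "tournament W" and g: "gen \<sigma> W h" and nt: "\<not> terminal h"
      using op unfolding on_path_def by blast
    obtain h' where h': "gen \<sigma> W h'" "\<not> terminal h'" "bad P \<sigma> h'" "conv P (hist_rel h')"
      using first_bad[OF rk g] g nt b by blast
    obtain x y where "\<sigma> h' = {x, y}" "(x, y) \<in> P"
      "misses_opportunity P (hist_rel h') x y \<or> takes_risk P (hist_rel h') x y"
      using h'(3) unfolding bad_def by blast
    then show False using core[OF rk str rf h'(1,2,4)] by blast
  qed
  show ?thesis
    unfolding never_misses_def never_risks_def using nb unfolding bad_def by blast
qed

theorem theorem3:
  fixes P :: "('a::finite \<times> 'a) set"
    and \<sigma> :: "('a \<times> 'a) list \<Rightarrow> 'a set"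
  assumes "ranking P"
    and "strategy \<sigma>"
  shows "regret_free P \<sigma> \<longleftrightarrow> never_misses P \<sigma> \<and> never_risks P \<sigma>"
  using only_if_dir[OF assms] if_dir[OF assms(1)] by blast

end
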